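(* Consider the two-layer multi-item order fulfillment problem described in the context with a single FDC ($K=1$), fixed costs $f_0\ge0$, $f_1>0$, and variable costs in $[a,b]$ for constants $b>a>0$. Let \textsc{Better-of-Two} run \textsc{Cost-Comparison AdjV-Priority} whenever $f_0\le f_1$ or $1+\max\{f_0/f_1,\sqrt{b/a}\}\le(4+\sqrt2)\max\{\sqrt{f_0/(2a)},\sqrt{b/a}\}$, and otherwise run \textsc{Order-Size AdjV-Priority} with $\eta=\sqrt{\max\{f_0/2,b\}/a}$ and $\theta=f_0/(2a\eta)$. Then \[\mathfrak R(\textsc{Better-of-Two})\le\min\left\{1+\max\left\{\frac{f_0}{f_1},\sqrt{\frac ba}\right\},\ B\right\}\le\max\left\{\min\left\{2\frac{f_0}{f_1},\ (2\sqrt2+1)\sqrt{\frac{f_0}{a}}\right\},\ (4+\sqrt2)\sqrt{\frac ba}\right\},\] where $B=(4+\sqrt2)\sqrt{\max\{f_0/2,b\}/a}$ if $f_0\ge f_1$ and $B=+\infty$ if $f_0<f_1$.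
   Context: Problem with one FDC (index $1$) and one RDC (index $0$, unlimited inventory). The FDC initially holds $I_{1,0}^i\ge0$ units of item $i\in[n]$, never replenished. In periods $t=1,\dots,T$ an order $\boldsymbol S_t=(S_t^i)_i$ of nonnegative integers arrives; the policy must immediately and irrevocably choose $m_{0,t}^i,m_{1,t}^i\ge0$ with $m_{0,t}^i+m_{1,t}^i=S_t^i$ and $m_{1,t}^i\le I_{1,t-1}^i$, where $I_{1,t}^i=I_{1,0}^i-\sum_{\tau\le t}m_{1,\tau}^i$. Period cost $\sum_{k=0,1}[f_k\mathbb{I}(\sum_im_{k,t}^i>0)+\sum_ic_{k,t}^im_{k,t}^i]$; total cost is the sum. Online policies use only fixed costs, initial inventories, constants $a,b$ and orders/variable costs up to the current period. $\mathfrak R(\mathrm{ALG})$ is the supremum of (expected) policy cost over offline optimal cost, over all $n,T$, initial inventories, variable costs in $[a,b]$ and order sequences. \textsc{Cost-Comparison AdjV-Priority}: in period $t$, for each $i$, $\hat m_{1,t}^i=\min\{S_t^i,I_{1,t-1}^i\}$ if $c_{1,t}^i<\sqrt{a/b}\,c_{0,t}^i$ else $0$, $\hat m_{0,t}^i=S_t^i-\hat m_{1,t}^i$; if $\sum_{k=0,1}[f_k\mathbb{I}(\sum_i\hat m_{k,t}^i>0)+\sum_ic_{k,t}^i\hat m_{k,t}^i]>f_0+\sum_ic_{0,t}^iS_t^i$ then the whole order is fulfilled from the RDC, otherwise $m=\hat m$. \textsc{Order-Size AdjV-Priority} with parameters $\eta\ge1,\theta\ge0$: in period $t$, for each $i$,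 $\hat m_{1,t}^i=\min\{S_t^i,I_{1,t-1}^i\}$ if $c_{1,t}^i<c_{0,t}^i/\eta$ else $0$, $\hat m_{0,t}^i=S_t^i-\hat m_{1,t}^i$; if $\sum_iS_t^i\le\theta$ and $I_{1,t-1}^i\ge S_t^i$ for all $i$, the whole order is fulfilled from the FDC, otherwise $m=\hat m$. *)

theory Defs
  imports "HOL-Analysis.Analysis"
begin

text \<open>An instance with a single FDC (index 1) and a single RDC (index 0).
  Items are indexed by i < n, periods by t in {1..T}.
  init_inv i = I_{1,0}^i, orders t i = S_t^i, cost0 t i = c_{0,t}^i, cost1 t i = c_{1,t}^i.\<close>
record inst =
  n_items :: nat
  horizon :: nat
  init_inv :: "nat \<Rightarrow> nat"
  orders :: "nat \<Rightarrow> nat \<Rightarrow> nat"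
  cost0 :: "nat \<Rightarrow> nat \<Rightarrow> real"
  cost1 :: "nat \<Rightarrow> nat \<Rightarrow> real"

definition valid_inst :: "real \<Rightarrow> real \<Rightarrow> inst \<Rightarrow> bool" where
  "valid_inst a b x \<longleftrightarrow>
     (\<forall>t \<in> {1..horizon x}. \<forall>i < n_items x.
        a \<le> cost0 x t i \<and> cost0 x t i \<le> b \<and> a \<le> cost1 x t i \<and> cost1 x t i \<le> b)"

text \<open>Cost of period t when m1 i = m_{1,t}^i units are shipped from the FDC
  and m_{0,t}^i = S_t^i - m_{1,t}^i from the RDC.\<close>
definition period_cost :: "real \<Rightarrow> real \<Rightarrow> inst \<Rightarrow> nat \<Rightarrow> (nat \<Rightarrow> nat) \<Rightarrow> real" where
  "period_cost f0 f1 x t m1 =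
     f0 * (if (\<Sum>i<n_items x. orders x t i - m1 i) > 0 then 1 else 0)
   + f1 * (if (\<Sum>i<n_items x. m1 i) > 0 then 1 else 0)
   + (\<Sum>i<n_items x. cost0 x t i * real (orders x t i - m1 i) + cost1 x t i * real (m1 i))"

definition feasible_plan :: "inst \<Rightarrow> (nat \<Rightarrow> nat \<Rightarrow> nat) \<Rightarrow> bool" where
  "feasible_plan x m1 \<longleftrightarrow>
     (\<forall>t \<in> {1..horizon x}. \<forall>i < n_items x.
        m1 t i \<le> orders x t i \<and> (\<Sum>\<tau>\<in>{1..t}. m1 \<tau> i) \<le> init_inv x i)"

definition total_cost :: "real \<Rightarrow> real \<Rightarrow> inst \<Rightarrow> (nat \<Rightarrow> nat \<Rightarrow> nat) \<Rightarrow> real" where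
  "total_cost f0 f1 x m1 = (\<Sum>t\<in>{1..horizon x}. period_cost f0 f1 x t (m1 t))"

definition OPT :: "real \<Rightarrow> real \<Rightarrow> inst \<Rightarrow> real" where
  "OPT f0 f1 x = Inf {total_cost f0 f1 x m1 | m1. feasible_plan x m1}"

text \<open>An (online) policy step: given the instance, the current period t and the
  current FDC inventory I_{1,t-1}, it returns the FDC shipments m_{1,t}.
  The policies below only inspect the data of period t.\<close>
type_synonym policy = "inst \<Rightarrow> nat \<Rightarrow> (nat \<Rightarrow> nat) \<Rightarrow> (nat \<Rightarrow> nat)"

fun inv_run :: "policy \<Rightarrow> inst \<Rightarrow> nat \<Rightarrow> (nat \<Rightarrow> nat)" where
  "inv_run P x 0 = init_inv x"
| "inv_run P x (Suc t) = (\<lambda>i. inv_run P x t i - P x (Suc t) (inv_run P x t) i)"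

definition plan_run :: "policy \<Rightarrow> inst \<Rightarrow> nat \<Rightarrow> nat \<Rightarrow> nat" where
  "plan_run P x t = P x t (inv_run P x (t - 1))"

definition policy_cost :: "real \<Rightarrow> real \<Rightarrow> policy \<Rightarrow> inst \<Rightarrow> real" where
  "policy_cost f0 f1 P x = total_cost f0 f1 x (plan_run P x)"

definition comp_ratio :: "real \<Rightarrow> real \<Rightarrow> real \<Rightarrow> real \<Rightarrow> policy \<Rightarrow> ereal" where
  "comp_ratio f0 f1 a b P =
     (SUP x \<in> {x. valid_inst a b x}. ereal (policy_cost f0 f1 P x / OPT f0 f1 x))"

definition cc_step :: "real \<Rightarrow> real \<Rightarrow> real \<Rightarrow> real \<Rightarrow> policy" where
  "cc_step f0 f1 a b x t cur =
     (let mh = (\<lambda>i. if cost1 x t i < sqrt (a / b) * cost0 x t i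
                     then min (orders x t i) (cur i) else 0)
      in if period_cost f0 f1 x t mh > f0 + (\<Sum>i<n_items x. cost0 x t i * real (orders x t i))
         then (\<lambda>i. 0) else mh)"

definition os_step :: "real \<Rightarrow> real \<Rightarrow> policy" where
  "os_step \<eta> \<theta> x t cur =
     (let mh = (\<lambda>i. if cost1 x t i < cost0 x t i / \<eta>
                     then min (orders x t i) (cur i) else 0)
      in if real (\<Sum>i<n_items x. orders x t i) \<le> \<theta> \<and> (\<forall>i < n_items x. cur i \<ge> orders x t i)
         then orders x t else mh)"

definition better_of_two :: "real \<Rightarrow> real \<Rightarrow> real \<Rightarrow> real \<Rightarrow> policy" where
  "better_of_two f0 f1 a b =
     (if f0 \<le> f1 \<or>
         1 + max (f0 / f1) (sqrt (b / a)) \<le> (4 + sqrt 2) * max (sqrt (f0 / (2 * a))) (sqrt (b / a))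
      then cc_step f0 f1 a b
      else (let \<eta> = sqrt (max (f0 / 2) b / a) in os_step \<eta> (f0 / (2 * a * \<eta>))))"

end

theory Submission
  imports Defs
begin


lemma amort:
  fixes cur xs op :: "nat \<Rightarrow> nat"
  assumes le: "\<And>k. xs (Suc k) \<le> cur k"
    and step: "\<And>k. cur (Suc k) = cur k - xs (Suc k)"
    and feas: "\<And>k. k \<in> {1..T} \<Longrightarrow> (\<Sum>\<tau>\<in>{1..k}. op \<tau>) \<le> cur 0"
  shows "(\<Sum>k\<in>{1..T}. op k - cur (k-1)) \<le> (\<Sum>k\<in>{1..T}. xs k - op k)"
proof -
  have "T' \<le> T \<Longrightarrow> (\<Sum>k\<in>{1..T'}. op k - cur (k-1)) \<le> (\<Sum>k\<in>{1..T'}. xs k - op k)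
     \<and> (\<Sum>k\<in>{1..T'}. op k - cur (k-1)) + (\<Sum>k\<in>{1..T'}. xs k) \<le> (\<Sum>k\<in>{1..T'}. xs k - op k) + (\<Sum>k\<in>{1..T'}. op k)
     \<and> cur T' + (\<Sum>k\<in>{1..T'}. xs k) = cur 0" for T'
  proof (induction T')
    case 0 then show ?case by simp
  next
    case (Suc T')
    define U where "U = (\<Sum>k\<in>{1..T'}. op k - cur (k-1))"
    define V where "V = (\<Sum>k\<in>{1..T'}. xs k - op k)"
    define X where "X = (\<Sum>k\<in>{1..T'}. xs k)"
    define Osm where "Osm = (\<Sum>k\<in>{1..T'}. op k)"
    have IH: "U \<le> V" "U + X \<le> V + Osm" "cur T' + X = cur 0"
      using Suc U_def V_def X_def Osm_def by auto
    have f: "Osm + op (Suc T') \<le> cur 0" using feas[of "Suc T'"] Suc.prems Osm_def by simp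
    have l: "xs (Suc T') \<le> cur T'" by (rule le)
    have s: "cur (Suc T') = cur T' - xs (Suc T')" by (rule step)
    have e1: "(\<Sum>k\<in>{1..Suc T'}. op k - cur (k-1)) = U + (op (Suc T') - cur T')"
      unfolding U_def by simp
    have e2: "(\<Sum>k\<in>{1..Suc T'}. xs k - op k) = V + (xs (Suc T') - op (Suc T'))"
      unfolding V_def by simp
    have e3: "(\<Sum>k\<in>{1..Suc T'}. xs k) = X + xs (Suc T')"
      unfolding X_def by simp
    have e4: "(\<Sum>k\<in>{1..Suc T'}. op k) = Osm + op (Suc T')"
      unfolding Osm_def by simp
    show ?case unfolding e1 e2 e3 e4 using IH f l s by linarith
  qed
  then show ?thesis by blast
qed

lemma inv_run_Suc: "inv_run P x (Suc k) i = inv_run P x k i - plan_run P x (Suc k) i"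
  by (simp add: plan_run_def)



lemma total_bound:
  assumes Ple: "\<And>t cur i. i < n_items x \<Longrightarrow> P x t cur i \<le> cur i"
    and feas: "feasible_plan x m"
    and alpha: "\<alpha> \<ge> 0"
    and per: "\<And>t. t \<in> {1..horizon x} \<Longrightarrow>
       period_cost f0 f1 x t (plan_run P x t) + \<alpha> * (\<Sum>i<n_items x. real (plan_run P x t i - m t i))
       \<le> R * period_cost f0 f1 x t (m t) + \<alpha> * (\<Sum>i<n_items x. real (m t i - inv_run P x (t-1) i))"
  shows "policy_cost f0 f1 P x \<le> R * total_cost f0 f1 x m"
proof -
  let ?T = "horizon x" and ?n = "n_items x"
  define u where "u t i = real (m t i - inv_run P x (t-1) i)" for t i
  define v where "v t i = real (plan_run P x t i - m t i)" for t i
  have item: "(\<Sum>t\<in>{1..?T}. u t i) \<le> (\<Sum>t\<in>{1..?T}. v t i)" if i: "i < ?n" for i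
  proof -
    have "(\<Sum>t\<in>{1..?T}. m t i - inv_run P x (t-1) i) \<le> (\<Sum>t\<in>{1..?T}. plan_run P x t i - m t i)"
    proof (rule amort[of "\<lambda>k. plan_run P x k i" "\<lambda>k. inv_run P x k i" ?T "\<lambda>k. m k i"])
      show "plan_run P x (Suc k) i \<le> inv_run P x k i" for k
        using Ple[OF i] by (simp add: plan_run_def)
      show "inv_run P x (Suc k) i = inv_run P x k i - plan_run P x (Suc k) i" for k
        by (simp add: plan_run_def)
      show "(\<Sum>\<tau>\<in>{1..k}. m \<tau> i) \<le> inv_run P x 0 i" if "k \<in> {1..?T}" for k
        using feas that i by (simp add: feasible_plan_def)
    qed
    then have "real (\<Sum>t\<in>{1..?T}. m t i - inv_run P x (t-1) i) \<le> real (\<Sum>t\<in>{1..?T}. plan_run P x t i - m t i)"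
      by (rule of_nat_mono)
    then show ?thesis unfolding u_def v_def of_nat_sum .
  qed
  have sw: "(\<Sum>i<?n. \<Sum>t\<in>{1..?T}. u t i) \<le> (\<Sum>i<?n. \<Sum>t\<in>{1..?T}. v t i)"
    by (rule sum_mono) (use item in auto)
  have sw1: "(\<Sum>t\<in>{1..?T}. \<Sum>i<?n. u t i) \<le> (\<Sum>t\<in>{1..?T}. \<Sum>i<?n. v t i)"
  proof -
    have "(\<Sum>i<?n. \<Sum>t\<in>{1..?T}. u t i) = (\<Sum>t\<in>{1..?T}. \<Sum>i<?n. u t i)" by (rule sum.swap)
    moreover have "(\<Sum>i<?n. \<Sum>t\<in>{1..?T}. v t i) = (\<Sum>t\<in>{1..?T}. \<Sum>i<?n. v t i)" by (rule sum.swap)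
    ultimately show ?thesis using sw by linarith
  qed
  have "policy_cost f0 f1 P x = (\<Sum>t\<in>{1..?T}. period_cost f0 f1 x t (plan_run P x t))"
    by (simp add: policy_cost_def total_cost_def)
  also have "\<dots> \<le> (\<Sum>t\<in>{1..?T}. R * period_cost f0 f1 x t (m t) + (\<alpha> * (\<Sum>i<?n. u t i) - \<alpha> * (\<Sum>i<?n. v t i)))"
  proof (rule sum_mono)
    fix t assume "t \<in> {1..?T}"
    from per[OF this] show "period_cost f0 f1 x t (plan_run P x t) \<le> R * period_cost f0 f1 x t (m t) + (\<alpha> * (\<Sum>i<?n. u t i) - \<alpha> * (\<Sum>i<?n. v t i))"
      unfolding u_def v_def by linarith
  qed
  also have "\<dots> = R * (\<Sum>t\<in>{1..?T}. period_cost f0 f1 x t (m t)) + (\<alpha> * (\<Sum>t\<in>{1..?T}. \<Sum>i<?n. u t i) - \<alpha> * (\<Sum>t\<in>{1..?T}. \<Sum>i<?n. v t i))"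
    by (simp only: sum.distrib sum_subtractf sum_distrib_left)
  also have "\<dots> \<le> R * total_cost f0 f1 x m"
    using sw1 alpha unfolding total_cost_def by (simp add: mult_left_mono)
  finally show ?thesis .
qed

lemma period_cost_nonneg:
  assumes "f0 \<ge> 0" "f1 \<ge> 0" "\<And>i. i < n_items x \<Longrightarrow> cost0 x t i \<ge> 0 \<and> cost1 x t i \<ge> 0"
  shows "period_cost f0 f1 x t m \<ge> 0"
proof -
  have "(\<Sum>i<n_items x. cost0 x t i * real (orders x t i - m i) + cost1 x t i * real (m i)) \<ge> 0"
    by (rule sum_nonneg) (use assms(3) in auto)
  then show ?thesis unfolding period_cost_def using assms(1,2) by simp
qed

lemma ratio_bound:
  assumes R: "R > 0" and f: "f0 \<ge> 0" "f1 \<ge> 0" and a: "a \<ge> 0"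
    and main: "\<And>x m. valid_inst a b x \<Longrightarrow> feasible_plan x m \<Longrightarrow> policy_cost f0 f1 P x \<le> R * total_cost f0 f1 x m"
  shows "comp_ratio f0 f1 a b P \<le> ereal R"
  unfolding comp_ratio_def
proof (rule SUP_least)
  fix x assume "x \<in> {x. valid_inst a b x}"
  then have v: "valid_inst a b x" by simp
  let ?S = "{total_cost f0 f1 x m1 | m1. feasible_plan x m1}"
  have ne: "?S \<noteq> {}"
  proof -
    have "feasible_plan x (\<lambda>_ _. 0)" by (simp add: feasible_plan_def)
    then show ?thesis by blast
  qed
  have nonneg: "total_cost f0 f1 x m1 \<ge> 0" for m1
    unfolding total_cost_def
  proof (rule sum_nonneg)
    fix t assume t: "t \<in> {1..horizon x}"
    show "period_cost f0 f1 x t (m1 t) \<ge> 0"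
    proof (rule period_cost_nonneg[OF f])
      fix i assume "i < n_items x"
      then have "a \<le> cost0 x t i \<and> a \<le> cost1 x t i" using v t unfolding valid_inst_def by auto
      then show "cost0 x t i \<ge> 0 \<and> cost1 x t i \<ge> 0" using a by auto
    qed
  qed
  have le: "policy_cost f0 f1 P x / R \<le> OPT f0 f1 x"
    unfolding OPT_def
  proof (rule cInf_greatest[OF ne])
    fix y assume "y \<in> ?S"
    then obtain m1 where "y = total_cost f0 f1 x m1" "feasible_plan x m1" by blast
    then show "policy_cost f0 f1 P x / R \<le> y" using main[OF v] R by (simp add: divide_le_eq mult.commute)
  qed
  have opt0: "OPT f0 f1 x \<ge> 0"
    unfolding OPT_def by (rule cInf_greatest[OF ne]) (use nonneg in auto)
  show "ereal (policy_cost f0 f1 P x / OPT f0 f1 x) \<le> ereal R"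
  proof (cases "OPT f0 f1 x = 0")
    case True then show ?thesis using R by simp
  next
    case False
    then have "OPT f0 f1 x > 0" using opt0 by simp
    then show ?thesis using le R by (simp add: divide_le_eq pos_divide_le_eq mult.commute)
  qed
qed



lemma item_cc:
  fixes S op cur :: nat and c0 c1 a b r M :: real
  assumes a: "a > 0" and r: "r \<ge> 1" and b: "b = r*r*a" and c: "a \<le> c0" "c0 \<le> b" "a \<le> c1" "c1 \<le> b"
    and M: "M \<ge> r" and o: "op \<le> S"
  defines "x \<equiv> (if r*c1 < c0 then min S cur else 0)"
  shows "c0 * real (S - x) + c1 * real x + (b - a) * real (x - op)
         \<le> (1+M) * (c0 * real (S - op) + c1 * real op) + (b-a) * real (op - cur)"
proof -
  have rr: "r*r \<ge> 1*1" by (rule mult_mono) (use r in auto)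
  have ba: "b \<ge> a" using mult_right_mono[OF rr, of a] a b by simp
  have u0: "(b-a) * real (op - cur) \<ge> 0" using ba by simp
  have c0p: "c0 \<ge> 0" "c1 \<ge> 0" using a c by auto
  have Mp: "M \<ge> 1" using M r by simp
  have sp: "real (S - op) = real S - real op" using o by (simp add: of_nat_diff)
  show ?thesis
  proof (cases "r*c1 < c0")
    case False
    then have x0: "x = 0" unfolding x_def by simp
    have "c0 \<le> M * c1"
    proof -
      have "r*c1 \<le> M*c1" using M c0p by (simp add: mult_right_mono)
      then show ?thesis using False by simp
    qed
    then have h1: "c0 * real op \<le> M * c1 * real op" by (simp add: mult_right_mono)
    have h2: "0 \<le> M * (c0 * real (S - op))" using Mp c0p by simp
    have h3: "0 \<le> c1 * real op" using c0p by simp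
    have "c0 * real (S - x) + c1 * real x + (b - a) * real (x - op) = c0 * real (S - op) + c0 * real op"
      using x0 sp by (simp add: algebra_simps)
    also have "\<dots> \<le> (1+M) * (c0 * real (S - op) + c1 * real op)"
      using h1 h2 h3 by (simp add: algebra_simps)
    also have "\<dots> \<le> (1+M) * (c0 * real (S - op) + c1 * real op) + (b-a) * real (op - cur)"
      using u0 by simp
    finally show ?thesis .
  next
    case True
    then have x1: "x = min S cur" unfolding x_def by simp
    have c1c0: "c1 \<le> c0"
    proof -
      have "1 * c1 \<le> r * c1" using r c0p by (intro mult_right_mono) auto
      then show ?thesis using True by simp
    qed
    have ra: "r * a \<le> c0"
    proof -
      have "r*a \<le> r*c1" using r c by (intro mult_left_mono) auto
      then show ?thesis using True by simp
    qed
    have Mc0: "b \<le> M * c0"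
    proof -
      have "r * (r*a) \<le> M * c0" using ra M r a by (intro mult_mono) auto
      then show ?thesis using b by (simp add: mult.assoc)
    qed
    show ?thesis
    proof (cases "op \<le> x")
      case True
      have xS: "x \<le> S" using x1 by simp
      have e1: "real (S - x) = real S - real x" using xS by (simp add: of_nat_diff)
      have e2: "real (x - op) = real x - real op" using True by (simp add: of_nat_diff)
      have k: "(c1 + (b - a)) * (real x - real op) \<le> ((1+M) * c0) * (real x - real op)"
        using True c1c0 Mc0 a by (intro mult_right_mono) (auto simp: algebra_simps)
      have k2: "0 \<le> M * (c0 * (real S - real x))" using xS Mp c0p by simp
      have k3: "0 \<le> M * (c1 * real op)" using Mp c0p by simp
      have "c0 * real (S - x) + c1 * real x + (b - a) * real (x - op)
          = c0 * (real S - real x) + c1 * real op + (c1 + (b - a)) * (real x - real op)"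
        unfolding e1 e2 by (simp add: algebra_simps)
      also have "\<dots> \<le> (1+M) * (c0 * real (S - op) + c1 * real op)"
        using k k2 k3 unfolding sp by (simp add: algebra_simps)
      also have "\<dots> \<le> (1+M) * (c0 * real (S - op) + c1 * real op) + (b-a) * real (op - cur)"
        using u0 by simp
      finally show ?thesis .
    next
      case False
      then have xc: "x = cur" and cS: "cur < S" using x1 o by auto
      have e1: "real (S - x) = real S - real x" using cS xc by (simp add: of_nat_diff)
      have e2: "real (x - op) = 0" using False by simp
      have e3: "real (op - cur) = real op - real x" using False xc by (simp add: of_nat_diff)
      have k: "c0 * (real op - real x) \<le> (c1 + (b - a)) * (real op - real x)"
        using False c a by (intro mult_right_mono) auto
      have k2: "0 \<le> M * (c0 * (real S - real op))" using o Mp c0p by simp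
      have k3: "0 \<le> M * (c1 * real op)" using Mp c0p by simp
      have "c0 * real (S - x) + c1 * real x + (b - a) * real (x - op)
          = c0 * (real S - real op) + c1 * real x + c0 * (real op - real x)"
        unfolding e1 e2 by (simp add: algebra_simps)
      also have "\<dots> \<le> (1+M) * (c0 * real (S - op) + c1 * real op) + (b-a) * real (op - cur)"
        using k k2 k3 unfolding sp e3 by (simp add: algebra_simps)
      finally show ?thesis .
    qed
  qed
qed

lemma item_cc2:
  fixes S cur :: nat and c0 c1 a b r M :: real
  assumes a: "a > 0" and r: "r \<ge> 1" and b: "b = r*r*a" and c: "a \<le> c0" "a \<le> c1"
    and M: "M \<ge> r"
  defines "x \<equiv> (if r*c1 < c0 then min S cur else 0)"
  shows "(b - a) * real x \<le> M * (c0 * real S)"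
proof (cases "r*c1 < c0")
  case True
  have ra: "r * a \<le> c0"
  proof -
    have "r*a \<le> r*c1" using r c by (intro mult_left_mono) auto
    then show ?thesis using True by simp
  qed
  have Mc0: "b \<le> M * c0"
  proof -
    have "r * (r*a) \<le> M * c0" using ra M r a by (intro mult_mono) auto
    then show ?thesis using b by (simp add: mult.assoc)
  qed
  have "(b - a) * real x \<le> (M * c0) * real x" using Mc0 a by (intro mult_right_mono) auto
  also have "\<dots> \<le> (M * c0) * real S" using True M r a c unfolding x_def
    by (intro mult_left_mono) auto
  finally show ?thesis by (simp add: mult.assoc)
next
  case False
  then show ?thesis unfolding x_def using M r a c by simp
qed

lemma item_gen:
  fixes S op cur :: nat and c0 c1 B \<alpha> \<beta> :: real and g :: bool
  assumes c: "c0 \<ge> 0" "c1 \<ge> 0" and o: "op \<le> S" and B: "B \<ge> 1" and be: "\<beta> \<ge> 0"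
    and ng: "\<not> g \<Longrightarrow> c0 \<le> B * c1"
    and gd: "g \<Longrightarrow> c1 + \<alpha> \<le> B * c0"
    and gd2: "g \<Longrightarrow> c0 \<le> c1 + \<beta>"
  defines "x \<equiv> (if g then min S cur else 0)"
  shows "c0 * real (S - x) + c1 * real x + \<alpha> * real (x - op)
         \<le> B * (c0 * real (S - op) + c1 * real op) + \<beta> * real (op - cur)"
proof -
  have u0: "\<beta> * real (op - cur) \<ge> 0" using be by simp
  have sp: "real (S - op) = real S - real op" using o by (simp add: of_nat_diff)
  show ?thesis
  proof (cases g)
    case False
    then have x0: "x = 0" unfolding x_def by simp
    have h1: "c0 * real op \<le> B * c1 * real op" using ng[OF False] by (simp add: mult_right_mono)
    have h2: "0 \<le> (B - 1) * (c0 * real (S - op))" using B c by simp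
    have h3: "0 \<le> c1 * real op" using c by simp
    have "c0 * real (S - x) + c1 * real x + \<alpha> * real (x - op) = c0 * real (S - op) + c0 * real op"
      using x0 sp by (simp add: algebra_simps)
    also have "\<dots> \<le> B * (c0 * real (S - op) + c1 * real op)"
      using h1 h2 h3 by (simp add: algebra_simps)
    also have "\<dots> \<le> B * (c0 * real (S - op) + c1 * real op) + \<beta> * real (op - cur)"
      using u0 by simp
    finally show ?thesis .
  next
    case True
    then have x1: "x = min S cur" unfolding x_def by simp
    show ?thesis
    proof (cases "op \<le> x")
      case True
      have xS: "x \<le> S" using x1 by simp
      have e1: "real (S - x) = real S - real x" using xS by (simp add: of_nat_diff)
      have e2: "real (x - op) = real x - real op" using True by (simp add: of_nat_diff)
      have k: "(c1 + \<alpha>) * (real x - real op) \<le> (B * c0) * (real x - real op)"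
        using True gd[OF \<open>g\<close>] by (intro mult_right_mono) auto
      have k2: "0 \<le> (B - 1) * (c0 * (real S - real x))" using xS B c by simp
      have k3: "0 \<le> (B - 1) * (c1 * real op)" using B c by simp
      have "c0 * real (S - x) + c1 * real x + \<alpha> * real (x - op)
          = c0 * (real S - real x) + c1 * real op + (c1 + \<alpha>) * (real x - real op)"
        unfolding e1 e2 by (simp add: algebra_simps)
      also have "\<dots> \<le> B * (c0 * real (S - op) + c1 * real op)"
        using k k2 k3 unfolding sp by (simp add: algebra_simps)
      also have "\<dots> \<le> B * (c0 * real (S - op) + c1 * real op) + \<beta> * real (op - cur)"
        using u0 by simp
      finally show ?thesis .
    next
      case False
      then have xc: "x = cur" and cS: "cur < S" using x1 o by auto
      have e1: "real (S - x) = real S - real x" using cS xc by (simp add: of_nat_diff)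
      have e2: "real (x - op) = 0" using False by simp
      have e3: "real (op - cur) = real op - real x" using False xc by (simp add: of_nat_diff)
      have k: "c0 * (real op - real x) \<le> (c1 + \<beta>) * (real op - real x)"
        using False gd2[OF \<open>g\<close>] by (intro mult_right_mono) auto
      have k2: "0 \<le> (B - 1) * (c0 * (real S - real op))" using o B c by simp
      have k3: "0 \<le> (B - 1) * (c1 * real op)" using B c by simp
      have "c0 * real (S - x) + c1 * real x + \<alpha> * real (x - op)
          = c0 * (real S - real op) + c1 * real x + c0 * (real op - real x)"
        unfolding e1 e2 by (simp add: algebra_simps)
      also have "\<dots> \<le> B * (c0 * real (S - op) + c1 * real op) + \<beta> * real (op - cur)"
        using k k2 k3 unfolding sp e3 by (simp add: algebra_simps)
      finally show ?thesis .
    qed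
  qed
qed



lemma cc_period:
  assumes a: "0 < a" "a < b" and f: "0 \<le> f0" "0 < f1"
    and cst: "\<And>i. i < n_items x \<Longrightarrow> a \<le> cost0 x t i \<and> cost0 x t i \<le> b \<and> a \<le> cost1 x t i \<and> cost1 x t i \<le> b"
    and ole: "\<And>i. i < n_items x \<Longrightarrow> op i \<le> orders x t i"
  shows "period_cost f0 f1 x t (cc_step f0 f1 a b x t cur)
           + (b-a) * (\<Sum>i<n_items x. real (cc_step f0 f1 a b x t cur i - op i))
         \<le> (1 + max (f0/f1) (sqrt (b/a))) * period_cost f0 f1 x t op
           + (b-a) * (\<Sum>i<n_items x. real (op i - cur i))"
proof -
  define n where "n = n_items x"
  define S where "S = orders x t"
  define c0 where "c0 = cost0 x t"
  define c1 where "c1 = cost1 x t"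
  define r where "r = sqrt (b/a)"
  define M where "M = max (f0/f1) r"
  define ALG where "ALG = cc_step f0 f1 a b x t cur"
  have cs: "\<And>i. i < n \<Longrightarrow> a \<le> c0 i \<and> c0 i \<le> b \<and> a \<le> c1 i \<and> c1 i \<le> b"
    using cst unfolding n_def c0_def c1_def by blast
  have cpos: "0 \<le> c0 i \<and> 0 \<le> c1 i" if "i < n" for i using cs[OF that] a by auto
  have ol: "\<And>i. i < n \<Longrightarrow> op i \<le> S i" using ole unfolding n_def S_def by blast
  have ba1: "b / a \<ge> 1" using a by simp
  have r1: "r \<ge> 1" unfolding r_def using ba1 by simp
  have rb: "b = r*r*a"
  proof -
    have "r * r = b / a" unfolding r_def using ba1 a by (simp add: real_sqrt_mult_self)
    then show ?thesis using a by simp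
  qed
  have sq: "sqrt (a/b) = 1/r" unfolding r_def using a
    by (simp add: real_sqrt_divide)
  have rpos: "r > 0" using r1 by simp
  have good: "(c1 i < sqrt (a/b) * c0 i) \<longleftrightarrow> (r * c1 i < c0 i)" for i
    unfolding sq using rpos by (simp add: field_simps)
  have M0: "M \<ge> r" "M \<ge> f0/f1" unfolding M_def by auto
  have Mf: "f0 \<le> M * f1" using M0(2) f by (simp add: divide_le_eq)
  have Mpos: "M \<ge> 0" using M0 r1 by simp
  have ba: "b - a \<ge> 0" using a by simp
  define mh where "mh i = (if r * c1 i < c0 i then min (S i) (cur i) else 0)" for i
  have mheq: "(\<lambda>i. if cost1 x t i < sqrt (a / b) * cost0 x t i then min (orders x t i) (cur i) else 0) = mh"
    by (rule ext) (simp add: mh_def good[unfolded c0_def c1_def] S_def c0_def c1_def)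
  define VA where "VA m = (\<Sum>i<n. c0 i * real (S i - m i) + c1 i * real (m i))" for m
  have pc: "period_cost f0 f1 x t m = f0 * (if (\<Sum>i<n. S i - m i) > 0 then 1 else 0)
        + f1 * (if (\<Sum>i<n. m i) > 0 then 1 else 0) + VA m" for m
    by (simp add: period_cost_def VA_def n_def S_def c0_def c1_def)
  have VAnn: "VA m \<ge> 0" for m
    unfolding VA_def by (rule sum_nonneg) (use cpos in \<open>auto intro!: add_nonneg_nonneg mult_nonneg_nonneg\<close>)
  have pcle: "period_cost f0 f1 x t m \<le> f0 + f1 + VA m" for m
    unfolding pc using f by auto
  define RC where "RC = f0 + (\<Sum>i<n. c0 i * real (S i))"
  have step: "ALG = (if period_cost f0 f1 x t mh > RC then (\<lambda>i. 0) else mh)"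
    unfolding ALG_def cc_step_def Let_def mheq RC_def by (simp add: n_def S_def c0_def c1_def)
  have VA0: "VA (\<lambda>i. 0) = (\<Sum>i<n. c0 i * real (S i))" unfolding VA_def by simp
  have pc0: "period_cost f0 f1 x t (\<lambda>i. 0) = f0 * (if (\<Sum>i<n. S i) > 0 then 1 else 0) + (\<Sum>i<n. c0 i * real (S i))"
    unfolding pc VA0 by simp
  have item: "c0 i * real (S i - mh i) + c1 i * real (mh i) + (b - a) * real (mh i - op i)
         \<le> (1+M) * (c0 i * real (S i - op i) + c1 i * real (op i)) + (b-a) * real (op i - cur i)"
    if i: "i < n" for i
    unfolding mh_def by (rule item_cc) (use a r1 rb cs[OF i] M0 ol[OF i] in auto)
  have sumitem: "VA mh + (b - a) * (\<Sum>i<n. real (mh i - op i))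
         \<le> (1+M) * VA op + (b-a) * (\<Sum>i<n. real (op i - cur i))"
  proof -
    have "(\<Sum>i<n. c0 i * real (S i - mh i) + c1 i * real (mh i) + (b - a) * real (mh i - op i))
        \<le> (\<Sum>i<n. (1+M) * (c0 i * real (S i - op i) + c1 i * real (op i)) + (b-a) * real (op i - cur i))"
      by (rule sum_mono) (use item in auto)
    moreover have "(\<Sum>i<n. c0 i * real (S i - mh i) + c1 i * real (mh i) + (b - a) * real (mh i - op i))
        = VA mh + (b - a) * (\<Sum>i<n. real (mh i - op i))"
      unfolding VA_def by (simp add: sum.distrib sum_distrib_left)
    moreover have "(\<Sum>i<n. (1+M) * (c0 i * real (S i - op i) + c1 i * real (op i)) + (b-a) * real (op i - cur i))
        = (1+M) * VA op + (b-a) * (\<Sum>i<n. real (op i - cur i))"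
      unfolding VA_def sum_distrib_left by (rule sum.distrib)
    ultimately show ?thesis by linarith
  qed
  have A1: "period_cost f0 f1 x t ALG \<le> period_cost f0 f1 x t mh"
  proof (cases "period_cost f0 f1 x t mh > RC")
    case True
    have "period_cost f0 f1 x t (\<lambda>i. 0) \<le> RC" unfolding pc0 RC_def using f by simp
    then show ?thesis using True step by simp
  qed (use step in simp)
  have A2: "(\<Sum>i<n. real (ALG i - op i)) \<le> (\<Sum>i<n. real (mh i - op i))"
  proof (cases "period_cost f0 f1 x t mh > RC")
    case True
    then show ?thesis using step by (simp add: sum_nonneg)
  qed (use step in simp)
  have A2': "(\<Sum>i<n. real (ALG i - op i)) \<le> (\<Sum>i<n. real (mh i))"
    using A2 by (smt (verit) of_nat_le_iff sum_mono diff_le_self)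
  have A3: "period_cost f0 f1 x t ALG \<le> f0 * (if (\<Sum>i<n. S i) > 0 then 1 else 0) + (\<Sum>i<n. c0 i * real (S i))"
  proof (cases "period_cost f0 f1 x t mh > RC")
    case True
    then show ?thesis using step pc0 by simp
  next
    case False
    then have e: "ALG = mh" using step by simp
    show ?thesis
    proof (cases "(\<Sum>i<n. S i) > 0")
      case True
      then show ?thesis using False e unfolding RC_def by simp
    next
      case F2: False
      then have S0: "\<And>i. i < n \<Longrightarrow> S i = 0" by simp
      then have "\<And>i. i < n \<Longrightarrow> mh i = 0" unfolding mh_def by simp
      then have "period_cost f0 f1 x t mh = 0" unfolding pc VA_def using S0 by simp
      then show ?thesis using e S0 by simp
    qed
  qed
  show ?thesis
  proof (cases "(\<Sum>i<n. op i) > 0")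
    case True
    have popt: "period_cost f0 f1 x t op \<ge> f1 + VA op" unfolding pc using True f by simp
    have "period_cost f0 f1 x t ALG + (b-a) * (\<Sum>i<n. real (ALG i - op i))
        \<le> f0 + f1 + VA mh + (b-a) * (\<Sum>i<n. real (mh i - op i))"
      using A1 A2 pcle[of mh] ba by (smt (verit) mult_left_mono)
    also have "\<dots> \<le> f0 + f1 + (1+M) * VA op + (b-a) * (\<Sum>i<n. real (op i - cur i))"
      using sumitem by simp
    also have "\<dots> \<le> (1+M) * (f1 + VA op) + (b-a) * (\<Sum>i<n. real (op i - cur i))"
      using Mf by (simp add: algebra_simps)
    also have "\<dots> \<le> (1+M) * period_cost f0 f1 x t op + (b-a) * (\<Sum>i<n. real (op i - cur i))"
      using popt Mpos by (simp add: mult_left_mono)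
    finally show ?thesis unfolding ALG_def n_def M_def r_def .
  next
    case False
    then have o0: "\<And>i. i < n \<Longrightarrow> op i = 0" by simp
    have popt: "period_cost f0 f1 x t op = f0 * (if (\<Sum>i<n. S i) > 0 then 1 else 0) + (\<Sum>i<n. c0 i * real (S i))"
      unfolding pc VA_def using o0 by simp
    have it2: "(b - a) * real (mh i) \<le> M * (c0 i * real (S i))" if i: "i < n" for i
      unfolding mh_def by (rule item_cc2) (use a r1 rb cs[OF i] M0 in auto)
    have s2: "(b-a) * (\<Sum>i<n. real (mh i)) \<le> M * (\<Sum>i<n. c0 i * real (S i))"
    proof -
      have "(\<Sum>i<n. (b - a) * real (mh i)) \<le> (\<Sum>i<n. M * (c0 i * real (S i)))"
        by (rule sum_mono) (use it2 in auto)
      then show ?thesis by (simp add: sum_distrib_left)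
    qed
    have cS: "(\<Sum>i<n. c0 i * real (S i)) \<ge> 0"
      by (rule sum_nonneg) (use cpos in auto)
    have fi: "f0 * (if (\<Sum>i<n. S i) > 0 then 1 else 0) \<ge> 0" using f by simp
    have "period_cost f0 f1 x t ALG + (b-a) * (\<Sum>i<n. real (ALG i - op i))
        \<le> f0 * (if (\<Sum>i<n. S i) > 0 then 1 else 0) + (\<Sum>i<n. c0 i * real (S i)) + M * (\<Sum>i<n. c0 i * real (S i))"
      using A3 A2' s2 ba by (smt (verit) mult_left_mono)
    also have "\<dots> \<le> (1+M) * period_cost f0 f1 x t op"
      unfolding popt using fi Mpos cS by (simp add: algebra_simps)
    also have "\<dots> \<le> (1+M) * period_cost f0 f1 x t op + (b-a) * (\<Sum>i<n. real (op i - cur i))"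
      using ba by (simp add: sum_nonneg)
    finally show ?thesis unfolding ALG_def n_def M_def r_def .
  qed
qed



lemma zero_sum_eq:
  fixes S op :: "nat \<Rightarrow> nat"
  assumes "\<not> 0 < (\<Sum>i<n. S i - op i)" "\<And>i. i < n \<Longrightarrow> op i \<le> S i" "i < n"
  shows "op i = S i"
proof -
  have "(\<Sum>i<n. S i - op i) = 0" using assms(1) by simp
  then have "S i - op i = 0" using assms(3) by simp
  then show ?thesis using assms(2)[OF assms(3)] by simp
qed

lemma os_period:
  assumes a: "0 < a" "a < b" and f: "0 \<le> f0" "0 < f1" "f1 \<le> f0"
    and cst: "\<And>i. i < n_items x \<Longrightarrow> a \<le> cost0 x t i \<and> cost0 x t i \<le> b \<and> a \<le> cost1 x t i \<and> cost1 x t i \<le> b"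
    and ole: "\<And>i. i < n_items x \<Longrightarrow> op i \<le> orders x t i"
    and eta: "\<eta> = sqrt (max (f0/2) b / a)"
  shows "period_cost f0 f1 x t (os_step \<eta> (f0 / (2 * a * \<eta>)) x t cur)
           + (4 * max (f0/2) b) * (\<Sum>i<n_items x. real (os_step \<eta> (f0 / (2 * a * \<eta>)) x t cur i - op i))
         \<le> ((4 + sqrt 2) * \<eta>) * period_cost f0 f1 x t op
           + (4 * max (f0/2) b) * (\<Sum>i<n_items x. real (op i - cur i))"
proof -
  define n where "n = n_items x"
  define S where "S = orders x t"
  define c0 where "c0 = cost0 x t"
  define c1 where "c1 = cost1 x t"
  define E where "E = max (f0/2) b"
  define \<theta> where "\<theta> = f0 / (2 * a * \<eta>)"
  define B where "B = (4 + sqrt 2) * \<eta>"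
  define \<alpha> where "\<alpha> = 4 * E"
  define ALG where "ALG = os_step \<eta> \<theta> x t cur"
  have cs: "\<And>i. i < n \<Longrightarrow> a \<le> c0 i \<and> c0 i \<le> b \<and> a \<le> c1 i \<and> c1 i \<le> b"
    using cst unfolding n_def c0_def c1_def by blast
  have cpos: "0 \<le> c0 i \<and> 0 \<le> c1 i" if "i < n" for i using cs[OF that] a by auto
  have ol: "\<And>i. i < n \<Longrightarrow> op i \<le> S i" using ole unfolding n_def S_def by blast
  have Eb: "E \<ge> b" "2 * E \<ge> f0" unfolding E_def by auto
  have Ea1: "E / a \<ge> 1" using Eb a by simp
  have eta1: "\<eta> \<ge> 1" unfolding eta E_def[symmetric] using Ea1 by simp
  have etaE: "\<eta> * \<eta> * a = E"
  proof -
    have "\<eta> * \<eta> = E / a" unfolding eta E_def[symmetric] using Ea1 a by (simp add: real_sqrt_mult_self)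
    then show ?thesis using a by simp
  qed
  have s2: "sqrt 2 \<ge> 1" by simp
  have B1: "B \<ge> 1 + 4 * \<eta>"
  proof -
    have "sqrt 2 * \<eta> \<ge> 1 * 1" using s2 eta1 by (intro mult_mono) auto
    then show ?thesis unfolding B_def by (simp add: algebra_simps)
  qed
  have B3: "B \<ge> 4 * \<eta>" using B1 by simp
  have Bge1: "B \<ge> 1" using B1 eta1 by simp
  have al0: "\<alpha> \<ge> 0" unfolding \<alpha>_def using Eb a by simp
  define mh where "mh i = (if \<eta> * c1 i < c0 i then min (S i) (cur i) else 0)" for i
  have good: "(c1 i < c0 i / \<eta>) \<longleftrightarrow> (\<eta> * c1 i < c0 i)" for i
    using eta1 by (simp add: field_simps)
  have mheq: "(\<lambda>i. if cost1 x t i < cost0 x t i / \<eta> then min (orders x t i) (cur i) else 0) = mh"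
    by (rule ext) (simp add: mh_def good[unfolded c0_def c1_def] S_def c0_def c1_def)
  define small where "small = (real (\<Sum>i<n. S i) \<le> \<theta> \<and> (\<forall>i<n. cur i \<ge> S i))"
  have step: "ALG = (if small then S else mh)"
    unfolding ALG_def os_step_def Let_def mheq small_def by (auto simp add: n_def S_def)
  define VA where "VA m = (\<Sum>i<n. c0 i * real (S i - m i) + c1 i * real (m i))" for m
  have pc: "period_cost f0 f1 x t m = f0 * (if (\<Sum>i<n. S i - m i) > 0 then 1 else 0)
        + f1 * (if (\<Sum>i<n. m i) > 0 then 1 else 0) + VA m" for m
    by (simp add: period_cost_def VA_def n_def S_def c0_def c1_def)
  have VAnn: "VA m \<ge> 0" for m
    unfolding VA_def by (rule sum_nonneg) (use cpos in \<open>auto intro!: add_nonneg_nonneg mult_nonneg_nonneg\<close>)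
  have pcle: "period_cost f0 f1 x t m \<le> f0 + f1 + VA m" for m
    unfolding pc using f by auto
  have pcnn: "period_cost f0 f1 x t m \<ge> 0" for m
    unfolding pc using f VAnn[of m] by auto
  define U where "U = (\<Sum>i<n. real (op i - cur i))"
  have U0: "U \<ge> 0" unfolding U_def by (simp add: sum_nonneg)
  have goal_eq: "?thesis \<longleftrightarrow> period_cost f0 f1 x t ALG + \<alpha> * (\<Sum>i<n. real (ALG i - op i))
      \<le> B * period_cost f0 f1 x t op + \<alpha> * U"
    unfolding ALG_def \<theta>_def B_def \<alpha>_def U_def E_def n_def by simp
  have itemg: "c0 i * real (S i - mh i) + c1 i * real (mh i) + \<alpha> * real (mh i - op i)
         \<le> B * (c0 i * real (S i - op i) + c1 i * real (op i)) + \<beta> * real (op i - cur i)"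
    if i: "i < n" and be: "\<beta> \<ge> b" for i \<beta>
    unfolding mh_def
  proof (rule item_gen)
    show "0 \<le> c0 i" "0 \<le> c1 i" using cpos[OF i] by auto
    show "op i \<le> S i" using ol[OF i] .
    show "1 \<le> B" by (rule Bge1)
    show "0 \<le> \<beta>" using be a by simp
    show "c0 i \<le> B * c1 i" if "\<not> \<eta> * c1 i < c0 i"
    proof -
      have "\<eta> * c1 i \<le> B * c1 i" using B3 eta1 cpos[OF i] by (intro mult_right_mono) auto
      then show ?thesis using that by simp
    qed
    show "c1 i + \<alpha> \<le> B * c0 i" if g: "\<eta> * c1 i < c0 i"
    proof -
      have "\<eta> * a \<le> \<eta> * c1 i" using cs[OF i] eta1 by (intro mult_left_mono) auto
      then have ea: "\<eta> * a \<le> c0 i" using g by simp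
      have "\<alpha> = 4 * \<eta> * (\<eta> * a)" unfolding \<alpha>_def etaE[symmetric] by (simp add: algebra_simps)
      also have "\<dots> \<le> 4 * \<eta> * c0 i" using ea eta1 by (intro mult_left_mono) auto
      finally have h1: "\<alpha> \<le> 4 * \<eta> * c0 i" .
      have "1 * c1 i \<le> \<eta> * c1 i" using eta1 cpos[OF i] by (intro mult_right_mono) auto
      then have h2: "c1 i \<le> c0 i" using g by simp
      have "(1 + 4 * \<eta>) * c0 i \<le> B * c0 i" using B1 cpos[OF i] by (intro mult_right_mono) auto
      then show ?thesis using h1 h2 by (simp add: algebra_simps)
    qed
    show "c0 i \<le> c1 i + \<beta>" using cs[OF i] be a by linarith
  qed
  have SI: "VA mh + \<alpha> * (\<Sum>i<n. real (mh i - op i)) \<le> B * VA op + \<beta> * U" if be: "\<beta> \<ge> b" for \<beta>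
  proof -
    have "(\<Sum>i<n. c0 i * real (S i - mh i) + c1 i * real (mh i) + \<alpha> * real (mh i - op i))
        \<le> (\<Sum>i<n. B * (c0 i * real (S i - op i) + c1 i * real (op i)) + \<beta> * real (op i - cur i))"
      by (rule sum_mono) (use itemg be in auto)
    moreover have "(\<Sum>i<n. c0 i * real (S i - mh i) + c1 i * real (mh i) + \<alpha> * real (mh i - op i))
        = VA mh + \<alpha> * (\<Sum>i<n. real (mh i - op i))"
      unfolding VA_def by (simp add: sum.distrib sum_distrib_left)
    moreover have "(\<Sum>i<n. B * (c0 i * real (S i - op i) + c1 i * real (op i)) + \<beta> * real (op i - cur i))
        = B * VA op + \<beta> * U"
      unfolding VA_def U_def sum_distrib_left by (rule sum.distrib)
    ultimately show ?thesis by linarith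
  qed
  have Eth: "E * \<theta> = \<eta> * f0 / 2"
    unfolding \<theta>_def etaE[symmetric] using a eta1 by (simp add: field_simps)
  have RS: "(\<Sum>i<n. real (S i)) \<ge> 0" by (simp add: sum_nonneg)
  show ?thesis
    unfolding goal_eq
  proof (cases small)
    case True
    then have A: "ALG = S" using step by simp
    have Rth: "(\<Sum>i<n. real (S i)) \<le> \<theta>" using True unfolding small_def by simp
    show "period_cost f0 f1 x t ALG + \<alpha> * (\<Sum>i<n. real (ALG i - op i)) \<le> B * period_cost f0 f1 x t op + \<alpha> * U"
    proof (cases "(\<Sum>i<n. S i - op i) > 0")
      case True
      have popt: "period_cost f0 f1 x t op \<ge> f0" unfolding pc using True f VAnn[of op] by simp
      have VS: "VA S \<le> b * (\<Sum>i<n. real (S i))"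
        unfolding VA_def sum_distrib_left by (rule sum_mono) (use cs in \<open>auto intro!: mult_right_mono\<close>)
      have pS: "period_cost f0 f1 x t S \<le> f1 + VA S" unfolding pc using f by simp
      have vS: "(\<Sum>i<n. real (S i - op i)) \<le> (\<Sum>i<n. real (S i))" by (rule sum_mono) simp
      have "period_cost f0 f1 x t ALG + \<alpha> * (\<Sum>i<n. real (ALG i - op i))
          \<le> f1 + b * (\<Sum>i<n. real (S i)) + \<alpha> * (\<Sum>i<n. real (S i))"
        unfolding A using pS VS vS al0 by (smt (verit) mult_left_mono)
      also have "\<dots> \<le> f1 + 5 * E * \<theta>"
      proof -
        have "(b + \<alpha>) * (\<Sum>i<n. real (S i)) \<le> (5 * E) * \<theta>"
          using Eb al0 Rth RS a unfolding \<alpha>_def by (intro mult_mono) auto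
        then show ?thesis by (simp add: algebra_simps)
      qed
      also have "\<dots> \<le> B * f0"
      proof -
        have "1 * f0 \<le> \<eta> * f0" using f eta1 by (intro mult_right_mono) auto
        then have "f1 \<le> \<eta> * f0" using f by linarith
        moreover have "4 * \<eta> * f0 \<le> B * f0" using B3 f by (intro mult_right_mono) auto
        moreover have "5 * E * \<theta> = 5/2 * (\<eta> * f0)" using Eth by (simp add: algebra_simps)
        moreover have "\<eta> * f0 \<ge> 0" using eta1 f by simp
        ultimately show ?thesis by linarith
      qed
      also have "\<dots> \<le> B * period_cost f0 f1 x t op + \<alpha> * U"
        using popt Bge1 al0 U0 by (smt (verit) mult_left_mono mult_nonneg_nonneg)
      finally show ?thesis .
    next
      case False
      then have oS: "\<And>i. i < n \<Longrightarrow> op i = S i" using zero_sum_eq[of S op n, OF _ ol] by blast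
      have e1: "(\<Sum>i<n. S i - op i) = (\<Sum>i<n. S i - S i)" by (rule sum.cong) (auto simp: oS)
      have e2: "(\<Sum>i<n. op i) = (\<Sum>i<n. S i)" by (rule sum.cong) (auto simp: oS)
      have e3: "VA op = VA S" unfolding VA_def by (rule sum.cong) (auto simp: oS)
      have "period_cost f0 f1 x t S = period_cost f0 f1 x t op"
        unfolding pc e1 e2 e3 ..
      moreover have "(\<Sum>i<n. real (S i - op i)) = 0" using oS by (intro sum.neutral) auto
      moreover have "1 * period_cost f0 f1 x t op \<le> B * period_cost f0 f1 x t op"
        using pcnn[of op] Bge1 by (intro mult_right_mono) auto
      moreover have "\<alpha> * U \<ge> 0" using al0 U0 by simp
      ultimately show ?thesis unfolding A by simp
    qed
  next
    case False
    then have A: "ALG = mh" using step by simp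
    show "period_cost f0 f1 x t ALG + \<alpha> * (\<Sum>i<n. real (ALG i - op i)) \<le> B * period_cost f0 f1 x t op + \<alpha> * U"
    proof (cases "(\<Sum>i<n. S i - op i) > 0")
      case True
      have popt: "period_cost f0 f1 x t op = f0 + f1 * (if (\<Sum>i<n. op i) > 0 then 1 else 0) + VA op"
        unfolding pc using True by simp
      have ff: "f0 + f1 \<le> B * (f0 + f1 * (if (\<Sum>i<n. op i) > 0 then 1 else 0))"
      proof (cases "(\<Sum>i<n. op i) > 0")
        case True
        then show ?thesis using Bge1 f by (simp add: mult_le_cancel_right1)
      next
        case False
        have h: "2 * f0 \<le> B * f0" using B3 eta1 f by (intro mult_right_mono) auto
        have "f1 * (if (\<Sum>i<n. op i) > 0 then 1 else 0) = 0" using False by simp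
        then show ?thesis using h f by (simp only: add_0_right)
      qed
      have "period_cost f0 f1 x t ALG + \<alpha> * (\<Sum>i<n. real (ALG i - op i))
          \<le> f0 + f1 + B * VA op + \<alpha> * U"
        unfolding A using pcle[of mh] SI[of \<alpha>] Eb a unfolding \<alpha>_def by simp
      also have "\<dots> \<le> B * period_cost f0 f1 x t op + \<alpha> * U"
        unfolding popt using ff by (simp add: algebra_simps)
      finally show ?thesis .
    next
      case F2: False
      then have oS: "\<And>i. i < n \<Longrightarrow> op i = S i" using zero_sum_eq[of S op n, OF _ ol] by blast
      have VAo: "VA op = (\<Sum>i<n. c1 i * real (S i))" unfolding VA_def using oS by simp
      show ?thesis
      proof (cases "\<exists>j<n. cur j < S j")
        case True
        then obtain j where j: "j < n" "cur j < S j" by blast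
        have U1: "U \<ge> 1"
        proof -
          have "real (op j - cur j) \<ge> 1" using j oS[OF j(1)] by simp
          also have "real (op j - cur j) \<le> U" unfolding U_def
            by (rule member_le_sum) (use j in auto)
          finally show ?thesis .
        qed
        have bb: "\<alpha> - f0 \<ge> b" using Eb a unfolding \<alpha>_def by linarith
        have popt: "period_cost f0 f1 x t op \<ge> f1 + VA op"
          unfolding pc using oS j f by (auto intro!: add_increasing simp: sum_pos2)
        have fU: "f0 \<le> f0 * U" using U1 f by (simp add: mult_le_cancel_left1)
        have "period_cost f0 f1 x t ALG + \<alpha> * (\<Sum>i<n. real (ALG i - op i))
          \<le> f0 + f1 + B * VA op + (\<alpha> - f0) * U"
          unfolding A using pcle[of mh] SI[OF bb] by simp
        also have "\<dots> \<le> B * (f1 + VA op) + \<alpha> * U"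
          using fU Bge1 f by (simp add: algebra_simps) (smt (verit) mult_le_cancel_right1)
        also have "\<dots> \<le> B * period_cost f0 f1 x t op + \<alpha> * U"
          using popt Bge1 by (simp add: mult_left_mono)
        finally show ?thesis .
      next
        case False
        then have cS: "\<And>i. i < n \<Longrightarrow> S i \<le> cur i" using not_less by blast
        then have big: "(\<Sum>i<n. real (S i)) > \<theta>" using \<open>\<not> small\<close> unfolding small_def by auto
        have v0: "(\<Sum>i<n. real (mh i - op i)) = 0" using oS unfolding mh_def by simp
        have it: "c0 i * real (S i - mh i) + c1 i * real (mh i) + 0 * real (mh i - S i)
              \<le> \<eta> * (c0 i * real (S i - S i) + c1 i * real (S i)) + b * real (S i - cur i)"
          if i: "i < n" for i
          unfolding mh_def
        proof (rule item_gen)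
          show "0 \<le> c0 i" "0 \<le> c1 i" using cpos[OF i] by auto
          show "1 \<le> \<eta>" by (rule eta1)
          show "0 \<le> b" using a by simp
          show "c0 i \<le> \<eta> * c1 i" if "\<not> \<eta> * c1 i < c0 i" using that by simp
          show "c1 i + 0 \<le> \<eta> * c0 i" if g: "\<eta> * c1 i < c0 i"
          proof -
            have "1 * c1 i \<le> \<eta> * c1 i" using eta1 cpos[OF i] by (intro mult_right_mono) auto
            moreover have "1 * c0 i \<le> \<eta> * c0 i" using eta1 cpos[OF i] by (intro mult_right_mono) auto
            ultimately show ?thesis using g by simp
          qed
          show "c0 i \<le> c1 i + b" using cs[OF i] a by linarith
        qed simp
        have VAm: "VA mh \<le> \<eta> * VA op"
        proof -
          have "(\<Sum>i<n. c0 i * real (S i - mh i) + c1 i * real (mh i)) \<le> (\<Sum>i<n. \<eta> * (c1 i * real (S i)))"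
            by (rule sum_mono) (use it cS in auto)
          then have "VA mh \<le> \<eta> * (\<Sum>i<n. c1 i * real (S i))" unfolding VA_def[of mh] sum_distrib_left .
          then show ?thesis using VAo by simp
        qed
        have VAa: "VA op \<ge> a * (\<Sum>i<n. real (S i))"
          unfolding VAo sum_distrib_left by (rule sum_mono) (use cs in \<open>auto intro!: mult_right_mono\<close>)
        have f0b: "f0 \<le> 2 * \<eta> * VA op"
        proof -
          have "a * \<theta> \<le> a * (\<Sum>i<n. real (S i))" using big a by simp
          moreover have "a * \<theta> = f0 / (2 * \<eta>)" unfolding \<theta>_def using a eta1 by (simp add: field_simps)
          ultimately have "f0 / (2 * \<eta>) \<le> VA op" using VAa by simp
          then show ?thesis using eta1 by (simp add: divide_le_eq mult.commute mult.left_commute)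
        qed
        have VAn: "VA op \<ge> 0" by (rule VAnn)
        have popt: "period_cost f0 f1 x t op \<ge> f1 * (if (\<Sum>i<n. op i) > 0 then 1 else 0) + VA op"
          unfolding pc using f by simp
        show ?thesis
        proof (cases "(\<Sum>i<n. op i) > 0")
          case True
          have "period_cost f0 f1 x t ALG + \<alpha> * (\<Sum>i<n. real (ALG i - op i)) \<le> f0 + f1 + \<eta> * VA op"
            unfolding A v0 using pcle[of mh] VAm by simp
          also have "\<dots> \<le> f1 + 3 * \<eta> * VA op" using f0b by simp
          also have "\<dots> \<le> B * (f1 + VA op)"
          proof -
            have "3 * \<eta> * VA op \<le> B * VA op" using B3 eta1 VAn by (intro mult_right_mono) auto
            moreover have "1 * f1 \<le> B * f1" using Bge1 f by (intro mult_right_mono) auto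
            ultimately show ?thesis by (simp add: distrib_left)
          qed
          also have "\<dots> \<le> B * period_cost f0 f1 x t op + \<alpha> * U"
          proof -
            have "f1 + VA op \<le> period_cost f0 f1 x t op" using popt True by simp
            then have "B * (f1 + VA op) \<le> B * period_cost f0 f1 x t op" using Bge1 by (intro mult_left_mono) auto
            moreover have "\<alpha> * U \<ge> 0" using al0 U0 by simp
            ultimately show ?thesis by linarith
          qed
          finally show ?thesis .
        next
          case False
          then have "\<And>i. i < n \<Longrightarrow> S i = 0" using oS by simp
          then have z: "\<And>i. i < n \<Longrightarrow> mh i = 0 \<and> S i = 0" unfolding mh_def by simp
          then have "period_cost f0 f1 x t ALG = 0" unfolding A pc VA_def by simp
          moreover have "(\<Sum>i<n. real (ALG i - op i)) = 0" unfolding A using z by simp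
          ultimately show ?thesis using pcnn[of op] Bge1 al0 U0 by simp
        qed
      qed
    qed
  qed
qed



lemma cc_le: "i < n_items x \<Longrightarrow> cc_step f0 f1 a b x t cur i \<le> cur i"
  unfolding cc_step_def Let_def by auto

lemma os_le: "i < n_items x \<Longrightarrow> os_step \<eta> \<theta> x t cur i \<le> cur i"
  unfolding os_step_def Let_def by auto

lemma inst_facts:
  assumes "valid_inst a b x" "feasible_plan x m" "t \<in> {1..horizon x}"
  shows "\<And>i. i < n_items x \<Longrightarrow> a \<le> cost0 x t i \<and> cost0 x t i \<le> b \<and> a \<le> cost1 x t i \<and> cost1 x t i \<le> b"
    and "\<And>i. i < n_items x \<Longrightarrow> m t i \<le> orders x t i"
  using assms unfolding valid_inst_def feasible_plan_def by auto

lemma cc_ratio: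
  assumes a: "0 < a" "a < b" and f: "0 \<le> f0" "0 < f1"
  shows "comp_ratio f0 f1 a b (cc_step f0 f1 a b) \<le> ereal (1 + max (f0/f1) (sqrt (b/a)))"
proof (rule ratio_bound)
  have "0 \<le> f0/f1" using f by simp
  then have "0 \<le> max (f0/f1) (sqrt (b/a))" by (simp add: le_max_iff_disj)
  then show "0 < 1 + max (f0/f1) (sqrt (b/a))" by linarith
  show "0 \<le> f0" "0 \<le> f1" "0 \<le> a" using a f by auto
  fix x m assume v: "valid_inst a b x" and fp: "feasible_plan x m"
  show "policy_cost f0 f1 (cc_step f0 f1 a b) x \<le> (1 + max (f0/f1) (sqrt (b/a))) * total_cost f0 f1 x m"
  proof (rule total_bound[where \<alpha> = "b - a"])
    show "cc_step f0 f1 a b x t cur i \<le> cur i" if "i < n_items x" for t cur i using cc_le[OF that] .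
    show "feasible_plan x m" by (rule fp)
    show "0 \<le> b - a" using a by simp
    fix t assume t: "t \<in> {1..horizon x}"
    show "period_cost f0 f1 x t (plan_run (cc_step f0 f1 a b) x t) +
         (b - a) * (\<Sum>i<n_items x. real (plan_run (cc_step f0 f1 a b) x t i - m t i))
         \<le> (1 + max (f0/f1) (sqrt (b/a))) * period_cost f0 f1 x t (m t) +
           (b - a) * (\<Sum>i<n_items x. real (m t i - inv_run (cc_step f0 f1 a b) x (t - 1) i))"
      unfolding plan_run_def
      by (rule cc_period[OF a f]) (use inst_facts[OF v fp t] in auto)
  qed
qed

lemma os_ratio:
  assumes a: "0 < a" "a < b" and f: "0 \<le> f0" "0 < f1" "f1 \<le> f0"
    and eta: "\<eta> = sqrt (max (f0/2) b / a)"
  shows "comp_ratio f0 f1 a b (os_step \<eta> (f0 / (2 * a * \<eta>))) \<le> ereal ((4 + sqrt 2) * \<eta>)"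
proof (rule ratio_bound)
  have "max (f0/2) b / a \<ge> 1" using a by simp
  then have e1: "\<eta> \<ge> 1" unfolding eta by simp
  show "0 < (4 + sqrt 2) * \<eta>" using e1 by (simp add: add_pos_pos)
  show "0 \<le> f0" "0 \<le> f1" "0 \<le> a" using a f by auto
  fix x m assume v: "valid_inst a b x" and fp: "feasible_plan x m"
  show "policy_cost f0 f1 (os_step \<eta> (f0 / (2 * a * \<eta>))) x \<le> ((4 + sqrt 2) * \<eta>) * total_cost f0 f1 x m"
  proof (rule total_bound[where \<alpha> = "4 * max (f0/2) b"])
    show "os_step \<eta> (f0 / (2 * a * \<eta>)) x t cur i \<le> cur i" if "i < n_items x" for t cur i using os_le[OF that] .
    show "feasible_plan x m" by (rule fp)
    show "0 \<le> 4 * max (f0/2) b" using a by simp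
    fix t assume t: "t \<in> {1..horizon x}"
    show "period_cost f0 f1 x t (plan_run (os_step \<eta> (f0 / (2 * a * \<eta>))) x t) +
         (4 * max (f0/2) b) * (\<Sum>i<n_items x. real (plan_run (os_step \<eta> (f0 / (2 * a * \<eta>))) x t i - m t i))
         \<le> ((4 + sqrt 2) * \<eta>) * period_cost f0 f1 x t (m t) +
           (4 * max (f0/2) b) * (\<Sum>i<n_items x. real (m t i - inv_run (os_step \<eta> (f0 / (2 * a * \<eta>))) x (t - 1) i))"
      unfolding plan_run_def
      by (rule os_period[OF a f _ _ eta]) (use inst_facts[OF v fp t] in auto)
  qed
qed



lemma sqrt_max: "sqrt (max x y) = max (sqrt x) (sqrt y)"
  by (cases "x \<le> y") (auto simp: max_def)

lemma max_div: "(a::real) > 0 \<Longrightarrow> max p q / a = max (p / a) (q / a)"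
  by (cases "p \<le> q") (auto simp: max_def divide_right_mono divide_le_cancel)

theorem corollary1:
  fixes f0 f1 a b :: real
  assumes "0 \<le> f0" and "0 < f1" and "0 < a" and "a < b"
  shows "comp_ratio f0 f1 a b (better_of_two f0 f1 a b)
           \<le> min (ereal (1 + max (f0 / f1) (sqrt (b / a))))
                 (if f0 \<ge> f1 then ereal ((4 + sqrt 2) * sqrt (max (f0 / 2) b / a)) else \<infinity>)
       \<and> min (ereal (1 + max (f0 / f1) (sqrt (b / a))))
                 (if f0 \<ge> f1 then ereal ((4 + sqrt 2) * sqrt (max (f0 / 2) b / a)) else \<infinity>)
           \<le> ereal (max (min (2 * (f0 / f1)) ((2 * sqrt 2 + 1) * sqrt (f0 / a)))
                         ((4 + sqrt 2) * sqrt (b / a)))"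
proof -
  note a = assms(3,4) and f = assms(1,2)
  define r where "r = sqrt (b/a)"
  define R1 where "R1 = 1 + max (f0/f1) r"
  define \<eta> where "\<eta> = sqrt (max (f0 / 2) b / a)"
  define Bv where "Bv = (4 + sqrt 2) * \<eta>"
  define Q where "Q = max (min (2 * (f0 / f1)) ((2 * sqrt 2 + 1) * sqrt (f0 / a))) ((4 + sqrt 2) * r)"
  have r1: "r \<ge> 1" unfolding r_def using a by simp
  have s2: "sqrt 2 \<ge> 1" by simp
  have s22: "sqrt 2 * sqrt 2 = 2" by simp
  have etamax: "\<eta> = max (sqrt (f0 / (2*a))) r"
    unfolding \<eta>_def r_def max_div[OF a(1)] sqrt_max by simp
  have etar: "\<eta> \<ge> r" unfolding etamax by simp
  have Bvr: "Bv \<ge> (4 + sqrt 2) * r" unfolding Bv_def using etar s2 by (intro mult_left_mono) auto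
  have r5: "(4 + sqrt 2) * r \<ge> 1 + r"
  proof -
    have "1 * 1 \<le> (3 + sqrt 2) * r" using r1 s2 by (intro mult_mono) auto
    then show ?thesis by (simp add: algebra_simps)
  qed
  have part1: "comp_ratio f0 f1 a b (better_of_two f0 f1 a b) \<le> min (ereal R1) (if f0 \<ge> f1 then ereal Bv else \<infinity>)"
  proof (cases "f0 \<le> f1 \<or> 1 + max (f0 / f1) (sqrt (b / a)) \<le> (4 + sqrt 2) * max (sqrt (f0 / (2 * a))) (sqrt (b / a))")
    case True
    then have P: "better_of_two f0 f1 a b = cc_step f0 f1 a b" by (simp add: better_of_two_def)
    have c: "comp_ratio f0 f1 a b (better_of_two f0 f1 a b) \<le> ereal R1"
      unfolding P R1_def r_def by (rule cc_ratio[OF a f])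
    have RB: "R1 \<le> Bv" if "f0 \<ge> f1"
    proof (cases "f0 \<le> f1")
      case True
      then have "f0 / f1 = 1" using that f by simp
      then have "R1 = 1 + r" unfolding R1_def using r1 by simp
      then show ?thesis using r5 Bvr by simp
    next
      case False
      then show ?thesis using True unfolding R1_def Bv_def etamax r_def by simp
    qed
    show ?thesis using c RB by auto
  next
    case False
    then have f10: "f1 < f0" by simp
    have BR: "Bv < R1" using False unfolding R1_def Bv_def etamax r_def by simp
    have P: "better_of_two f0 f1 a b = os_step \<eta> (f0 / (2 * a * \<eta>))"
      using False unfolding better_of_two_def \<eta>_def Let_def by simp
    have c: "comp_ratio f0 f1 a b (better_of_two f0 f1 a b) \<le> ereal Bv"
      unfolding P Bv_def by (rule os_ratio[OF a f]) (use f10 \<eta>_def in auto)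
    show ?thesis using c BR f10 by auto
  qed
  have part2: "min (ereal R1) (if f0 \<ge> f1 then ereal Bv else \<infinity>) \<le> ereal Q"
  proof (cases "f0 \<ge> f1")
    case False
    then have "f0 / f1 < 1" using f by simp
    then have "R1 = 1 + r" unfolding R1_def using r1 by simp
    then have "R1 \<le> Q" unfolding Q_def using r5 by simp
    then show ?thesis using False by simp
  next
    case True
    have "min R1 Bv \<le> Q"
    proof (cases "f0 / f1 \<le> r")
      case True
      then have "R1 = 1 + r" unfolding R1_def by simp
      then show ?thesis unfolding Q_def using r5 by simp
    next
      case False
      have q1: "f0 / f1 \<ge> 1" using \<open>f0 \<ge> f1\<close> f by simp
      have R1e: "R1 = 1 + f0 / f1" unfolding R1_def using False by simp
      have R12: "R1 \<le> 2 * (f0 / f1)" using R1e q1 by simp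
      show ?thesis
      proof (cases "f0 / 2 \<le> b")
        case True
        then have "\<eta> = r" unfolding \<eta>_def r_def by simp
        then show ?thesis unfolding Q_def Bv_def by simp
      next
        case F2: False
        have "\<eta> = sqrt (f0 / (2*a))" unfolding \<eta>_def using F2 by (simp add: max_def)
        also have "\<dots> = sqrt (f0 / a) / sqrt 2"
          by (simp add: real_sqrt_divide[symmetric] mult.commute)
        finally have "Bv = (4 + sqrt 2) * (sqrt (f0 / a) / sqrt 2)" unfolding Bv_def by simp
        also have "\<dots> = (2 * sqrt 2 + 1) * sqrt (f0 / a)"
        proof -
          have "4 = 2 * (sqrt 2 * sqrt 2)" using s22 by simp
          then have "(4 + sqrt 2) = (2 * sqrt 2 + 1) * sqrt 2" by (simp add: algebra_simps)
          then show ?thesis by simp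
        qed
        finally have Bve: "Bv = (2 * sqrt 2 + 1) * sqrt (f0 / a)" .
        show ?thesis unfolding Q_def Bve using R12 by (simp add: min_def max_def)
      qed
    qed
    then show ?thesis using True by (cases "R1 \<le> Bv") (auto simp: min_def)
  qed
  show ?thesis using part1 part2 unfolding R1_def r_def Bv_def \<eta>_def Q_def by simp
qed

end
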